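(* Let $G_1$ and $G_2$ be directed graphs without self-loops on the common vertex set $[n]=\{1,\dots,n\}$. If $G_1$ and $G_2$ are distribution equivalent, i.e. $\mathcal{P}(G_1)=\mathcal{P}(G_2)$, then $G_1$ and $G_2$ have the same strongly connected components (the partitions of $[n]$ into strongly connected components of $G_1$ and of $G_2$ coincide).
   Context: For a directed graph $G$ on $[n]$ without self-loops, let $B_G\in\{0,1\}^{n\times n}$ be its adjacency matrix with $[B_G]_{ij}=1$ iff there is an edge $j\to i$. A linear structural causal model consistent with $G$ is $\mathbf{x}=W\mathbf{x}+\mathbf{e}$ where $W\in\mathbb{R}^{n\times n}$ has $\{(i,j):W_{ij}\neq 0\}=\{(i,j):[B_G]_{ij}=1\}$, $I-W$ is invertible, and the noise vector $\mathbf{e}$ has jointly independent components of which at most one is Gaussian. The distribution set $\mathcal{P}(G)$ is the set of all distributions of $\mathbf{x}=(I-W)^{-1}\mathbf{e}$ arising from all such $W$ and all such noise distributions. $G_1,G_2$ are distribution equivalent if $\mathcal{P}(G_1)=\mathcal{P}(G_2)$. Two vertices $u,v$ are strongly connected if there are directed paths from $u$ to $v$ and from $v$ to $u$; the equivalence classes of this relation are the strongly connected components. *)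

theory Defs
  imports "HOL-Probability.Probability"
begin

text \<open>Vertices are the elements of a finite type 'n (playing the role of [n]).
  A directed graph is an edge set G; (j,i) \<in> G means an edge j \<rightarrow> i.
  Matrices are real^'n^'n, with W $ i $ j the (i,j) entry.\<close>

definition no_self_loops :: "('n \<times> 'n) set \<Rightarrow> bool" where
  "no_self_loops G \<longleftrightarrow> (\<forall>i. (i, i) \<notin> G)"

text \<open>W is consistent with G: its support is exactly the adjacency pattern B_G.\<close>
definition consistent_weights :: "('n \<times> 'n) set \<Rightarrow> real^'n^'n \<Rightarrow> bool" where
  "consistent_weights G W \<longleftrightarrow> (\<forall>i j. W $ i $ j \<noteq> 0 \<longleftrightarrow> (j, i) \<in> G)"

text \<open>A (non-degenerate) Gaussian distribution on the reals.\<close>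
definition gaussian_measure :: "real measure \<Rightarrow> bool" where
  "gaussian_measure \<mu> \<longleftrightarrow> (\<exists>m \<sigma>. \<sigma> > 0 \<and> \<mu> = density lborel (normal_density m \<sigma>))"

text \<open>Admissible noise: a family of Borel probability distributions for the
  components; jointly independent, so the noise vector has the product distribution;
  at most one component is Gaussian.\<close>
definition admissible_noise :: "('n \<Rightarrow> real measure) \<Rightarrow> bool" where
  "admissible_noise \<mu> \<longleftrightarrow>
     (\<forall>i. prob_space (\<mu> i) \<and> sets (\<mu> i) = sets borel) \<and>
     card {i. gaussian_measure (\<mu> i)} \<le> 1"

text \<open>Distribution of x = (I - W)^{-1} e where e has independent components with laws \<mu> i.\<close>
definition sem_distribution :: "real^'n^'n \<Rightarrow> ('n::finite \<Rightarrow> real measure) \<Rightarrow> (real^'n) measure" where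
  "sem_distribution W \<mu> =
     distr (PiM UNIV \<mu>) borel (\<lambda>e. matrix_inv (mat 1 - W) *v (\<chi> i. e i))"

definition distribution_set :: "('n::finite \<times> 'n) set \<Rightarrow> (real^'n) measure set" where
  "distribution_set G =
     {sem_distribution W \<mu> | W \<mu>. consistent_weights G W \<and> invertible (mat 1 - W)
                                  \<and> admissible_noise \<mu>}"

definition distribution_equivalent :: "('n::finite \<times> 'n) set \<Rightarrow> ('n \<times> 'n) set \<Rightarrow> bool" where
  "distribution_equivalent G1 G2 \<longleftrightarrow> distribution_set G1 = distribution_set G2"

definition strongly_connected :: "('n \<times> 'n) set \<Rightarrow> 'n \<Rightarrow> 'n \<Rightarrow> bool" where
  "strongly_connected G u v \<longleftrightarrow> (u, v) \<in> G\<^sup>* \<and> (v, u) \<in> G\<^sup>*"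

definition sc_rel :: "('n \<times> 'n) set \<Rightarrow> ('n \<times> 'n) set" where
  "sc_rel G = {(u, v). strongly_connected G u v}"

definition scc_partition :: "('n \<times> 'n) set \<Rightarrow> 'n set set" where
  "scc_partition G = UNIV // sc_rel G"

end

theory Submission
  imports Defs
begin

definition beta :: "real measure" where
  "beta = distr (measure_pmf (bernoulli_pmf (1/2))) borel (\<lambda>b. if b then 1 else 0)"
lemma beta_pt: "emeasure beta {c} = (if c = 0 \<or> c = 1 then ennreal (1/2) else 0)"
proof -
  have "emeasure beta {c} = emeasure (measure_pmf (bernoulli_pmf (1/2))) {b. (if b then 1 else 0) = c}"
    unfolding beta_def by (subst emeasure_distr) (auto simp: vimage_def)
  also have "\<dots> = (if c = 0 \<or> c = 1 then ennreal (1/2) else 0)"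
  proof -
    have "{b. (if b then 1 else 0) = c} = (if c = 0 then {False} else if c = 1 then {True} else {})"
      by auto
    then show ?thesis by (auto simp: emeasure_pmf_single)
  qed
  finally show ?thesis .
qed
lemma beta_not_gauss: "\<not> gaussian_measure beta"
proof
  assume "gaussian_measure beta"
  then obtain m s where "beta = density lborel (normal_density m s)" unfolding gaussian_measure_def by auto
  then have "emeasure beta {0} = 0"
  proof -
    have "AE x in lborel. x \<in> {0::real} \<longrightarrow> ennreal (normal_density m s x) = 0"
      by (rule AE_I'[OF finite_imp_null_set_lborel[of "{0}"]]) auto
    then have "{0::real} \<in> null_sets (density lborel (normal_density m s))"
      by (subst null_sets_density_iff) auto
    then show ?thesis using \<open>beta = _\<close> by auto
  qed
  then show False by (simp add: beta_pt)
qed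

lemma beta_sets: "sets beta = sets borel" unfolding beta_def by simp
lemma beta_prob: "prob_space beta" unfolding beta_def
  by (rule prob_space.prob_space_distr) (auto simp: measure_pmf.prob_space_axioms)

lemma meas_vec: 
  fixes A :: "real^'n::finite^'n"
  assumes "\<And>i. sets (\<mu> i) = sets borel"
  shows "(\<lambda>e. A *v (\<chi> i. e i)) \<in> borel_measurable (PiM UNIV \<mu>)"
proof -
  have "sets (PiM UNIV \<mu>) = sets (PiM UNIV (\<lambda>_. borel))"
    by (rule sets_PiM_cong) (auto simp: assms)
  then have eq: "borel_measurable (PiM UNIV \<mu>) = (borel_measurable (PiM UNIV (\<lambda>_. borel)) :: (('n \<Rightarrow> real) \<Rightarrow> real^'n) set)"
    by (rule measurable_cong_sets) simp
  have "(\<lambda>e. (A *v (\<chi> i. e i)) $ k) \<in> borel_measurable (PiM UNIV (\<lambda>_. borel))" for k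
    unfolding matrix_vector_mult_def by simp
  then show ?thesis unfolding eq
    by (subst borel_measurable_euclidean_space) (auto simp: Basis_vec_def cart_eq_inner_axis[symmetric])
qed

lemma minv:
  fixes N :: "real^'n::finite^'n"
  assumes "invertible N"
  shows "N ** matrix_inv N = mat 1" "matrix_inv N ** N = mat 1"
  using someI_ex[OF assms[unfolded invertible_def]] unfolding matrix_inv_def by auto

lemma point_mass:
  fixes W :: "real^'n::finite^'n"
  assumes sets: "\<And>i. sets (\<mu> i) = sets borel" and pr: "\<And>i. prob_space (\<mu> i)"
    and inv: "invertible (mat 1 - W)"
  shows "emeasure (sem_distribution W \<mu>) {x} = (\<Prod>i\<in>UNIV. emeasure (\<mu> i) {((mat 1 - W) *v x) $ i})"
proof -
  let ?N = "mat 1 - W"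
  let ?A = "matrix_inv ?N"
  interpret product_sigma_finite \<mu>
    unfolding product_sigma_finite_def using pr by (simp add: prob_space_imp_sigma_finite)
  have sp: "space (\<mu> i) = UNIV" for i using sets_eq_imp_space_eq[OF sets[of i]] by simp
  have "(\<lambda>e. ?A *v (\<chi> i. e i)) -` {x} \<inter> space (PiM UNIV \<mu>) = Pi\<^sub>E UNIV (\<lambda>i. {(?N *v x) $ i})"
  proof -
    have "?A *v (\<chi> i. e i) = x \<longleftrightarrow> (\<chi> i. e i) = ?N *v x" for e
      by (metis inv matrix_vector_mul_assoc matrix_vector_mul_lid minv)
    then show ?thesis by (auto simp: space_PiM sp vec_eq_iff PiE_def extensional_def Pi_iff)
  qed
  then show ?thesis
    unfolding sem_distribution_def
    by (subst emeasure_distr) (auto simp: meas_vec sets emeasure_PiM)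
qed


lemma periodic:
  fixes \<sigma> :: "'n::finite \<Rightarrow> 'n"
  assumes "inj \<sigma>"
  shows "\<exists>m>0. (\<sigma>^^m) i = i"
proof -
  have "\<not> inj (\<lambda>k::nat. (\<sigma>^^k) i)"
  proof
    assume "inj (\<lambda>k::nat. (\<sigma>^^k) i)"
    then have "finite (UNIV :: nat set)"
      using finite_imageD[of "\<lambda>k::nat. (\<sigma>^^k) i" UNIV] by simp
    then show False by simp
  qed
  then obtain a b :: nat where ab: "a \<noteq> b" "(\<sigma>^^a) i = (\<sigma>^^b) i"
    unfolding inj_def by blast
  then have "\<exists>a b. a < b \<and> (\<sigma>^^a) i = (\<sigma>^^b) i"
    by (metis linorder_neqE_nat)
  then obtain a b where ab: "a < b" "(\<sigma>^^a) i = (\<sigma>^^b) i" by blast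
  have "(\<sigma>^^b) i = (\<sigma>^^a) ((\<sigma>^^(b-a)) i)"
    using ab(1) by (metis funpow_add le_add_diff_inverse less_imp_le o_apply)
  then have "(\<sigma>^^a) i = (\<sigma>^^a) ((\<sigma>^^(b-a)) i)" using ab by simp
  then have "i = (\<sigma>^^(b-a)) i" using inj_fn[OF assms, of a] unfolding inj_def by blast
  then show ?thesis using ab(1) by (intro exI[of _ "b-a"]) auto
qed

lemma back_reach:
  fixes \<sigma> :: "'n::finite \<Rightarrow> 'n"
  assumes "inj \<sigma>" and step: "\<And>a. (a, \<sigma> a) \<in> R\<^sup>*"
  shows "(\<sigma> i, i) \<in> R\<^sup>*"
proof -
  have gen: "(a, (\<sigma>^^n) a) \<in> R\<^sup>*" for a n
  proof (induction n)
    case 0 then show ?case by simp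
  next
    case (Suc n)
    then show ?case using step[of "(\<sigma>^^n) a"] by (simp add: rtrancl_trans)
  qed
  obtain m where m: "m > 0" "(\<sigma>^^m) i = i" using periodic[OF assms(1)] by blast
  have "(\<sigma>^^m) i = (\<sigma>^^(m-1)) (\<sigma> i)"
    using m(1) by (metis Suc_diff_1 funpow_Suc_right o_apply)
  then have "(\<sigma>^^(m-1)) (\<sigma> i) = i" using m(2) by metis
  then show ?thesis using gen[of "\<sigma> i" "m-1"] by simp
qed


lemma exists_W:
  fixes G :: "('n::finite \<times> 'n) set"
  shows "\<exists>W. consistent_weights G W \<and> invertible (mat 1 - W)"
proof -
  define \<epsilon> :: real where "\<epsilon> = 1 / (2 * real CARD('n))"
  have epos: "\<epsilon> > 0" unfolding \<epsilon>_def by simp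
  define W :: "real^'n^'n" where "W = (\<chi> i j. if (j, i) \<in> G then \<epsilon> else 0)"
  have cons: "consistent_weights G W"
    unfolding consistent_weights_def W_def using epos by auto
  have ker: "x = 0" if "(mat 1 - W) *v x = 0" for x :: "real^'n"
  proof -
    have xW: "x = W *v x" using that
      by (simp add: matrix_vector_mult_diff_rdistrib)
    define m where "m = Max (range (\<lambda>i. \<bar>x $ i\<bar>))"
    have le_m: "\<bar>x $ j\<bar> \<le> m" for j unfolding m_def by (rule Max_ge) auto
    have bound: "\<bar>x $ i\<bar> \<le> m / 2" for i
    proof -
      have xi: "x $ i = (W *v x) $ i" using xW by (rule arg_cong[where f="\<lambda>v. v $ i"])
      have "\<bar>x $ i\<bar> = \<bar>\<Sum>j\<in>UNIV. W $ i $ j * x $ j\<bar>"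
        unfolding xi by (simp add: matrix_vector_mult_def)
      also have "\<dots> \<le> (\<Sum>j\<in>UNIV. \<bar>W $ i $ j * x $ j\<bar>)" by (rule sum_abs)
      also have "\<dots> \<le> (\<Sum>j\<in>(UNIV::'n set). \<epsilon> * m)"
      proof (rule sum_mono)
        fix j
        have "\<bar>W $ i $ j\<bar> \<le> \<epsilon>" unfolding W_def using epos by auto
        then show "\<bar>W $ i $ j * x $ j\<bar> \<le> \<epsilon> * m"
          by (simp add: abs_mult mult_mono le_m)
      qed
      also have "\<dots> = m / 2" unfolding \<epsilon>_def by simp
      finally show ?thesis .
    qed
    have "m \<in> range (\<lambda>i. \<bar>x $ i\<bar>)" unfolding m_def by (rule Max_in) auto
    then obtain i0 where "m = \<bar>x $ i0\<bar>" by auto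
    then have "m \<le> 0" using bound[of i0] by simp
    then show "x = 0" using le_m by (simp add: vec_eq_iff) (meson abs_le_zero_iff order.trans)
  qed
  have "inj ((*v) (mat 1 - W))"
  proof (rule injI)
    fix x y assume "(mat 1 - W) *v x = (mat 1 - W) *v y"
    then have "(mat 1 - W) *v (x - y) = 0" by (simp add: matrix_vector_mult_diff_distrib)
    then have "x - y = 0" by (rule ker)
    then show "x = y" by simp
  qed
  then obtain B where "B ** (mat 1 - W) = mat 1"
    using matrix_left_invertible_injective by blast
  then have "invertible (mat 1 - W)"
    unfolding invertible_def using matrix_left_right_inverse by blast
  then show ?thesis using cons by blast
qed


lemma mv_axis: "((M::real^'n::finite^'m) *v axis i a) $ l = M $ l $ i * a"
  by (simp add: matrix_vector_mult_def axis_def if_distrib cong: if_cong)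

lemma inj_prod:
  fixes N1 N2 :: "real^'n::finite^'n"
  assumes "invertible N1" "invertible N2"
  shows "(N1 ** N2) *v v = 0 \<Longrightarrow> v = 0"
proof -
  assume "(N1 ** N2) *v v = 0"
  then have "N1 *v (N2 *v v) = N1 *v 0" by (simp add: matrix_vector_mul_assoc)
  then have "N2 *v v = N2 *v 0" using inj_matrix_vector_mult[OF assms(1)] unfolding inj_def by simp
  then show "v = 0" using inj_matrix_vector_mult[OF assms(2)] unfolding inj_def by blast
qed

lemma row_unique:
  fixes N1 N2 :: "real^'n::finite^'n" and h :: "'n \<Rightarrow> real \<Rightarrow> ennreal"
  assumes inv1: "invertible N1" and inv2: "invertible N2"
    and H: "\<And>x. (\<forall>i. h i ((N2 *v x) $ i) \<noteq> 0) \<longleftrightarrow> (\<forall>i. (N1 *v x) $ i \<in> {0,1})"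
    and bj: "(N2 ** matrix_inv N1) $ i $ j \<noteq> 0" and bk: "(N2 ** matrix_inv N1) $ i $ k \<noteq> 0"
  shows "j = k"
proof (rule ccontr)
  assume jk: "j \<noteq> k"
  define A where "A = matrix_inv N1"
  define A' where "A' = matrix_inv N2"
  define B where "B = N2 ** A"
  define C where "C = N1 ** A'"
  have invA: "invertible A" using minv[OF inv1] unfolding A_def invertible_def by blast
  have invA': "invertible A'" using minv[OF inv2] unfolding A'_def invertible_def by blast
  define Y where "Y y \<longleftrightarrow> (\<forall>i. (C *v y) $ i \<in> {0,1})" for y
  have HY: "(\<forall>i. h i (y $ i) \<noteq> 0) \<longleftrightarrow> Y y" for y
  proof -
    have "N2 *v (A' *v y) = y"
      by (simp add: A'_def matrix_vector_mul_assoc minv[OF inv2])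
    moreover have "N1 *v (A' *v y) = C *v y"
      by (simp add: C_def matrix_vector_mul_assoc)
    ultimately show ?thesis using H[of "A' *v y"] unfolding Y_def by simp
  qed
  have grid: "Y (\<chi> l. if l = i then y' $ i else y $ l)" if "Y y" "Y y'" for y y'
  proof -
    have "\<forall>l. h l (y $ l) \<noteq> 0" "\<forall>l. h l (y' $ l) \<noteq> 0" using that HY by auto
    then have "\<forall>l. h l ((\<chi> l. if l = i then y' $ i else y $ l) $ l) \<noteq> 0" by auto
    then show ?thesis using HY by blast
  qed
  have CB: "C ** B = mat 1"
  proof -
    have "C ** B = N1 ** (A' ** N2) ** A" by (simp add: C_def B_def matrix_mul_assoc)
    also have "\<dots> = mat 1" by (simp add: A'_def A_def minv[OF inv1] minv[OF inv2])
    finally show ?thesis .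
  qed
  have BY: "Y (B *v s)" if "\<forall>l. s $ l \<in> {0,1}" for s
    using that unfolding Y_def by (simp add: matrix_vector_mul_assoc CB)
  have Y0: "Y 0" unfolding Y_def by simp
  have ax: "Y (axis i ((B *v s) $ i))" if "\<forall>l. s $ l \<in> {0,1}" for s
  proof -
    have "Y (\<chi> l. if l = i then (B *v s) $ i else (0::real^'n) $ l)" by (rule grid[OF Y0 BY[OF that]])
    moreover have "(\<chi> l. if l = i then (B *v s) $ i else (0::real^'n) $ l) = axis i ((B *v s) $ i)"
      by (simp add: axis_def vec_eq_iff)
    ultimately show ?thesis by simp
  qed
  have "C *v axis i 1 \<noteq> 0"
  proof
    assume "C *v axis i 1 = 0"
    then have "axis i (1::real) = 0" unfolding C_def by (rule inj_prod[OF inv1 invA'])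
    then show False by (simp add: axis_eq_0_iff)
  qed
  then obtain l where l: "C $ l $ i \<noteq> 0" by (auto simp: vec_eq_iff mv_axis)
  have key: "a * C $ l $ i \<in> {0,1}" if "Y (axis i a)" for a
    using that unfolding Y_def by (auto simp: mv_axis mult.commute dest: spec[of _ l])
  have s1: "\<forall>l. (axis j 1 :: real^'n) $ l \<in> {0,1}" by (simp add: axis_def)
  have s2: "\<forall>l. (axis k 1 :: real^'n) $ l \<in> {0,1}" by (simp add: axis_def)
  have s3: "\<forall>l. (axis j 1 + axis k 1 :: real^'n) $ l \<in> {0,1}" using jk by (simp add: axis_def)
  have e1: "(B *v axis j 1) $ i = B $ i $ j" by (simp add: mv_axis)
  have e2: "(B *v axis k 1) $ i = B $ i $ k" by (simp add: mv_axis)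
  have e3: "(B *v (axis j 1 + axis k 1)) $ i = B $ i $ j + B $ i $ k"
    by (simp add: mv_axis matrix_vector_right_distrib)
  have k1: "B $ i $ j * C $ l $ i \<in> {0,1}" using key[OF ax[OF s1]] e1 by simp
  have k2: "B $ i $ k * C $ l $ i \<in> {0,1}" using key[OF ax[OF s2]] e2 by simp
  have k3: "(B $ i $ j + B $ i $ k) * C $ l $ i \<in> {0,1}" using key[OF ax[OF s3]] e3 by simp
  have nz1: "B $ i $ j \<noteq> 0" using bj unfolding B_def A_def .
  have nz2: "B $ i $ k \<noteq> 0" using bk unfolding B_def A_def .
  have "B $ i $ j * C $ l $ i = 1" using k1 nz1 l by auto
  moreover have "B $ i $ k * C $ l $ i = 1" using k2 nz2 l by auto
  ultimately have "(B $ i $ j + B $ i $ k) * C $ l $ i = 2" by (simp add: distrib_right)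
  then show False using k3 by simp
qed


lemma reach:
  fixes W1 W2 :: "real^'n::finite^'n"
  assumes cons1: "consistent_weights G1 W1" and cons2: "consistent_weights G2 W2"
    and inv1: "invertible (mat 1 - W1)" and inv2: "invertible (mat 1 - W2)"
    and nsl: "no_self_loops G2"
    and uniq: "\<And>i j k. ((mat 1 - W2) ** matrix_inv (mat 1 - W1)) $ i $ j \<noteq> 0 \<Longrightarrow>
                      ((mat 1 - W2) ** matrix_inv (mat 1 - W1)) $ i $ k \<noteq> 0 \<Longrightarrow> j = k"
  shows "G2 \<subseteq> G1\<^sup>*"
proof -
  define N1 where "N1 = mat 1 - W1"
  define N2 where "N2 = mat 1 - W2"
  define B where "B = N2 ** matrix_inv N1"
  have uB: "B $ i $ j \<noteq> 0 \<Longrightarrow> B $ i $ k \<noteq> 0 \<Longrightarrow> j = k" for i j k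
    using uniq unfolding B_def N1_def N2_def by blast
  have N2B: "N2 = B ** N1"
    unfolding B_def by (simp add: matrix_mul_assoc[symmetric] minv[OF inv1[folded N1_def]])
  have N1e: "N1 $ a $ b = (if a = b then 1 else 0) - W1 $ a $ b" for a b
    unfolding N1_def by (simp add: mat_def)
  have N2e: "N2 $ a $ b = (if a = b then 1 else 0) - W2 $ a $ b" for a b
    unfolding N2_def by (simp add: mat_def)
  have W2d: "W2 $ i $ i = 0" for i using cons2 nsl unfolding consistent_weights_def no_self_loops_def by blast
  have ex: "\<exists>j. B $ i $ j \<noteq> 0" for i
  proof (rule ccontr)
    assume "\<nexists>j. B $ i $ j \<noteq> 0"
    then have "N2 $ i $ i = 0" unfolding N2B by (simp add: matrix_matrix_mult_def)
    then show False using N2e[of i i] W2d[of i] by simp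
  qed
  define \<sigma> where "\<sigma> i = (SOME j. B $ i $ j \<noteq> 0)" for i
  have s1: "B $ i $ \<sigma> i \<noteq> 0" for i unfolding \<sigma>_def using someI_ex[OF ex[of i]] .
  have s2: "B $ i $ j * N1 $ j $ k = (if j = \<sigma> i then B $ i $ \<sigma> i * N1 $ \<sigma> i $ k else 0)" for i j k
  proof (cases "j = \<sigma> i")
    case True then show ?thesis by simp
  next
    case False
    then have "B $ i $ j = 0" using uB[OF _ s1[of i], of j] by auto
    then show ?thesis using False by simp
  qed
  have rowN2: "N2 $ i $ k = B $ i $ \<sigma> i * N1 $ \<sigma> i $ k" for i k
  proof -
    have "N2 $ i $ k = (\<Sum>j\<in>UNIV. B $ i $ j * N1 $ j $ k)" unfolding N2B by (simp add: matrix_matrix_mult_def)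
    also have "\<dots> = (\<Sum>j\<in>UNIV. if j = \<sigma> i then B $ i $ \<sigma> i * N1 $ \<sigma> i $ k else 0)"
      by (rule sum.cong) (rule refl, rule s2)
    also have "\<dots> = B $ i $ \<sigma> i * N1 $ \<sigma> i $ k" by simp
    finally show ?thesis .
  qed
  have nzN: "N2 $ i $ k \<noteq> 0 \<Longrightarrow> N1 $ \<sigma> i $ k \<noteq> 0" for i k using rowN2 by simp
  have invB: "invertible B"
  proof -
    have "invertible (matrix_inv N1)" using minv[OF inv1[folded N1_def]] unfolding invertible_def by blast
    then show ?thesis unfolding B_def using inv2[folded N2_def]
      by (simp add: invertible_mult)
  qed
  have surj: "surj \<sigma>"
  proof -
    have "\<exists>i. \<sigma> i = j" for j
    proof -
      have "B *v axis j 1 \<noteq> 0"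
      proof
        assume "B *v axis j 1 = 0"
        then have "B *v axis j 1 = B *v 0" by simp
        then have "axis j (1::real) = 0" using inj_matrix_vector_mult[OF invB] unfolding inj_def by blast
        then show False by (simp add: axis_eq_0_iff)
      qed
      then obtain i where "B $ i $ j \<noteq> 0" by (auto simp: vec_eq_iff mv_axis)
      then show ?thesis using uB[OF _ s1[of i]] by metis
    qed
    then show ?thesis by (metis surjI)
  qed
  have inj: "inj \<sigma>" using surj by (simp add: finite_UNIV_surj_inj)
  have step: "(a, \<sigma> a) \<in> G1\<^sup>*" for a
  proof (cases "\<sigma> a = a")
    case True then show ?thesis by simp
  next
    case False
    have "N2 $ a $ a \<noteq> 0" using N2e[of a a] W2d[of a] by simp
    then have "N1 $ \<sigma> a $ a \<noteq> 0" by (rule nzN)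
    then have "W1 $ \<sigma> a $ a \<noteq> 0" using N1e False by simp
    then have "(a, \<sigma> a) \<in> G1" using cons1 unfolding consistent_weights_def by blast
    then show ?thesis by simp
  qed
  show ?thesis
  proof
    fix e assume "e \<in> G2"
    then obtain k i where e: "e = (k, i)" "(k, i) \<in> G2" by (cases e) auto
    then have ki: "k \<noteq> i" using nsl unfolding no_self_loops_def by auto
    have "W2 $ i $ k \<noteq> 0" using e cons2 unfolding consistent_weights_def by blast
    then have "N2 $ i $ k \<noteq> 0" using N2e ki by simp
    then have "N1 $ \<sigma> i $ k \<noteq> 0" by (rule nzN)
    then have "k = \<sigma> i \<or> W1 $ \<sigma> i $ k \<noteq> 0" using N1e by (auto split: if_splits)
    then have "(k, \<sigma> i) \<in> G1\<^sup>*" using cons1 unfolding consistent_weights_def by auto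
    moreover have "(\<sigma> i, i) \<in> G1\<^sup>*" by (rule back_reach[OF inj step])
    ultimately show "e \<in> G1\<^sup>*" using e by (meson rtrancl_trans)
  qed
qed

lemma half:
  fixes G1 G2 :: "('n::finite \<times> 'n) set"
  assumes nsl: "no_self_loops G2" and sub: "distribution_set G1 \<subseteq> distribution_set G2"
  shows "G2\<^sup>* \<subseteq> G1\<^sup>*"
proof -
  obtain W1 where W1: "consistent_weights G1 W1" "invertible (mat 1 - W1)" using exists_W by blast
  define P where "P = sem_distribution W1 (\<lambda>_::'n. beta)"
  have adm: "admissible_noise (\<lambda>_::'n. beta)"
    unfolding admissible_noise_def using beta_prob beta_sets beta_not_gauss by simp
  have "P \<in> distribution_set G1" unfolding distribution_set_def P_def using W1 adm by blast
  then have "P \<in> distribution_set G2" using sub by blast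
  then obtain W2 \<mu> where W2: "consistent_weights G2 W2" "invertible (mat 1 - W2)"
    and adm2: "admissible_noise \<mu>" and PW2: "P = sem_distribution W2 \<mu>"
    unfolding distribution_set_def by blast
  have pr: "\<And>i. prob_space (\<mu> i)" and st: "\<And>i. sets (\<mu> i) = sets borel"
    using adm2 unfolding admissible_noise_def by auto
  have pm1: "emeasure P {x} = (\<Prod>i\<in>UNIV. emeasure beta {((mat 1 - W1) *v x) $ i})" for x
    unfolding P_def by (rule point_mass[OF beta_sets beta_prob W1(2)])
  have pm2: "emeasure P {x} = (\<Prod>i\<in>UNIV. emeasure (\<mu> i) {((mat 1 - W2) *v x) $ i})" for x
    unfolding PW2 by (rule point_mass[OF st pr W2(2)])
  have H: "(\<forall>i. emeasure (\<mu> i) {((mat 1 - W2) *v x) $ i} \<noteq> 0) \<longleftrightarrow> (\<forall>i. ((mat 1 - W1) *v x) $ i \<in> {0,1})" for x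
  proof -
    have "(\<forall>i. emeasure (\<mu> i) {((mat 1 - W2) *v x) $ i} \<noteq> 0) \<longleftrightarrow> emeasure P {x} \<noteq> 0"
      unfolding pm2 by (simp add: ennreal_prod_eq_0)
    also have "\<dots> \<longleftrightarrow> (\<forall>i. emeasure beta {((mat 1 - W1) *v x) $ i} \<noteq> 0)"
      unfolding pm1 by (simp add: ennreal_prod_eq_0)
    also have "\<dots> \<longleftrightarrow> (\<forall>i. ((mat 1 - W1) *v x) $ i \<in> {0,1})"
      by (simp add: beta_pt)
    finally show ?thesis .
  qed
  have "G2 \<subseteq> G1\<^sup>*"
    by (rule reach[OF W1(1) W2(1) W1(2) W2(2) nsl row_unique[OF W1(2) W2(2) H]])
  then show ?thesis by (rule rtrancl_subset_rtrancl)
qed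

theorem theorem1:
  fixes G1 G2 :: "('n::finite \<times> 'n) set"
  assumes "no_self_loops G1" and "no_self_loops G2"
    and "distribution_equivalent G1 G2"
  shows "scc_partition G1 = scc_partition G2"
proof -
  have eq: "distribution_set G1 = distribution_set G2"
    using assms(3) unfolding distribution_equivalent_def .
  have "G2\<^sup>* \<subseteq> G1\<^sup>*" by (rule half[OF assms(2)]) (simp add: eq)
  moreover have "G1\<^sup>* \<subseteq> G2\<^sup>*" by (rule half[OF assms(1)]) (simp add: eq)
  ultimately have "G1\<^sup>* = G2\<^sup>*" by blast
  then have "sc_rel G1 = sc_rel G2" unfolding sc_rel_def strongly_connected_def by simp
  then show ?thesis unfolding scc_partition_def by simp
qed

end
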